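(* Let $X=[0,1]$ with the Euclidean metric, $T(x)=2x \bmod 1$, and $\mu$ Lebesgue measure. Let $(r_n)_n$ be a sequence of positive numbers with $n^2r_n\to0$. Then $(\mu\times\mu)(\liminf_n E_{n,r_n}^T)=0$.
   Context: For $n\in\mathbb{N}$ and $r>0$, $E_{n,r}^{T}:=\{(x,y)\in X\times X : |T^i x- T^j y|<r \text{ for some } 0\le i,j<n\}$; $E_{n,r_n}^T$ is this set with $r=r_n$. *)

theory Defs
  imports "HOL-Analysis.Analysis" "HOL-Library.Liminf_Limsup"
begin

definition doubling :: "real \<Rightarrow> real" where
  "doubling x = frac (2 * x)"

definition unit_leb :: "real measure" where
  "unit_leb = restrict_space lborel {0..1}"

definition E_set :: "(real \<Rightarrow> real) \<Rightarrow> nat \<Rightarrow> real \<Rightarrow> (real \<times> real) set" where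
  "E_set T n r = {(x, y). x \<in> {0..1} \<and> y \<in> {0..1} \<and>
      (\<exists>i<n. \<exists>j<n. \<bar>(T ^^ i) x - (T ^^ j) y\<bar> < r)}"

end

theory Submission
  imports Defs
begin

lemma frac_double_frac: "frac (2 * frac y) = frac (2 * (y::real))"
proof -
  have "2 * frac y = 2 * y + of_int (- 2 * floor y)" by (simp add: frac_def)
  then show ?thesis by (simp only: frac_add_of_int_right)
qed

lemma doubling_pow: "(doubling ^^ Suc i) x = frac (2 ^ Suc i * x)"
proof (induction i)
  case 0
  show ?case by (simp add: doubling_def)
next
  case (Suc i)
  then show ?case by (simp add: doubling_def frac_double_frac mult.assoc)
qed

lemma doubling_pow_meas_borel: "(doubling ^^ i) \<in> borel_measurable borel"
proof (cases i)
  case 0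
  then show ?thesis by simp
next
  case (Suc k)
  have "(doubling ^^ i) = (\<lambda>x. 2 ^ i * x - real_of_int (floor (2 ^ i * x)))"
  proof
    fix x
    show "(doubling ^^ i) x = 2 ^ i * x - real_of_int (floor (2 ^ i * x))"
      using doubling_pow[of k x] Suc by (simp only: frac_def)
  qed
  then show ?thesis by simp
qed

lemma doubling_pow_int:
  assumes "x \<in> {0..1}"
  shows "\<exists>k::nat. k \<le> 2 ^ i \<and> (doubling ^^ i) x = 2 ^ i * x - real k"
proof (cases i)
  case 0
  then show ?thesis by (intro exI[of _ 0]) simp
next
  case (Suc m)
  define f where "f = floor (2 ^ i * x)"
  have f0: "0 \<le> f" unfolding f_def using assms by auto
  have "2 ^ i * x \<le> 2 ^ i" using assms by auto
  then have f1: "f \<le> 2 ^ i" unfolding f_def by (metis floor_mono floor_of_int of_int_numeral of_int_power)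
  have "(doubling ^^ i) x = 2 ^ i * x - real (nat f)"
    using Suc doubling_pow[of m x] f0 by (simp add: frac_def f_def)
  moreover have "nat f \<le> 2 ^ i" using f1 f0 by (simp add: nat_le_iff)
  ultimately show ?thesis by blast
qed

lemma doubling_pow_meas[measurable]: "(doubling ^^ i) \<in> borel_measurable unit_leb"
  unfolding unit_leb_def
  by (rule measurable_restrict_space1) (simp add: doubling_pow_meas_borel)

lemma space_unit_leb[simp]: "space unit_leb = {0..1}"
  by (simp add: unit_leb_def space_restrict_space)

lemma finite_unit_leb: "finite_measure unit_leb"
proof (rule finite_measureI)
  have "emeasure unit_leb {0..1} = emeasure lborel {0..1::real}"
    unfolding unit_leb_def by (rule emeasure_restrict_space) auto
  then show "emeasure unit_leb (space unit_leb) \<noteq> \<infinity>" by simp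
qed

lemma one_dim_bound:
  assumes r: "r > 0"
  shows "emeasure unit_leb {x\<in>{0..1}. \<bar>(doubling ^^ i) x - c\<bar> < r} \<le> ennreal (4 * r)"
proof -
  let ?A = "{x\<in>{0..1}. \<bar>(doubling ^^ i) x - c\<bar> < r}"
  let ?I = "\<lambda>k::nat. {(real k + c - r) / 2 ^ i <..< (real k + c + r) / 2 ^ i}"
  let ?U = "\<Union>k\<in>{0..2 ^ i}. ?I k"
  have sub: "?A \<subseteq> ?U"
  proof
    fix x assume x: "x \<in> ?A"
    then obtain k :: nat where k: "k \<le> 2 ^ i" "(doubling ^^ i) x = 2 ^ i * x - real k"
      using doubling_pow_int[of x i] by auto
    have "\<bar>2 ^ i * x - real k - c\<bar> < r" using x k by auto
    then have "x \<in> ?I k" by (auto simp: field_simps abs_less_iff)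
    then show "x \<in> ?U" using k by auto
  qed
  have "emeasure unit_leb ?A = emeasure lborel ?A"
    unfolding unit_leb_def by (rule emeasure_restrict_space) auto
  also have "\<dots> \<le> emeasure lborel ?U"
    by (rule emeasure_mono[OF sub]) auto
  also have "\<dots> \<le> (\<Sum>k\<in>{0..2 ^ i}. emeasure lborel (?I k))"
    by (rule emeasure_subadditive_finite) auto
  also have "\<dots> = (\<Sum>k\<in>{0..2 ^ i::nat}. ennreal (2 * r / 2 ^ i))"
  proof (rule sum.cong)
    fix k assume "k \<in> {0..2 ^ i::nat}"
    have "(real k + c - r) / 2 ^ i \<le> (real k + c + r) / 2 ^ i"
      using r by (simp add: divide_right_mono)
    then show "emeasure lborel (?I k) = ennreal (2 * r / 2 ^ i)"
      by (simp add: diff_divide_distrib[symmetric])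
  qed simp
  also have "\<dots> = of_nat (2 ^ i + 1) * ennreal (2 * r / 2 ^ i)"
    by simp
  also have "\<dots> = ennreal (real (2 ^ i + 1)) * ennreal (2 * r / 2 ^ i)"
    by (simp only: ennreal_of_nat_eq_real_of_nat)
  also have "\<dots> = ennreal ((2 ^ i + 1) * (2 * r / 2 ^ i))"
    using r by (subst ennreal_mult[symmetric]) auto
  also have "\<dots> \<le> ennreal (4 * r)"
  proof (rule ennreal_leI)
    have "(2 ^ i + 1) * (2 * r / 2 ^ i) = 2 * r + 2 * r / 2 ^ i"
      by (simp add: field_simps)
    also have "\<dots> \<le> 2 * r + 2 * r" using r by (simp add: divide_le_eq)
    finally show "(2 ^ i + 1) * (2 * r / 2 ^ i) \<le> 4 * r" by simp
  qed
  finally show ?thesis .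
qed

definition S_set :: "nat \<Rightarrow> nat \<Rightarrow> real \<Rightarrow> (real \<times> real) set" where
  "S_set i j r = {p \<in> space (unit_leb \<Otimes>\<^sub>M unit_leb).
     \<bar>(doubling ^^ i) (fst p) - (doubling ^^ j) (snd p)\<bar> < r}"

lemma S_set_sets: "S_set i j r \<in> sets (unit_leb \<Otimes>\<^sub>M unit_leb)"
  unfolding S_set_def by measurable

lemma S_set_bound:
  assumes r: "r > 0"
  shows "emeasure (unit_leb \<Otimes>\<^sub>M unit_leb) (S_set i j r) \<le> ennreal (4 * r)"
proof -
  interpret finite_measure unit_leb by (rule finite_unit_leb)
  have "emeasure (unit_leb \<Otimes>\<^sub>M unit_leb) (S_set i j r)
      = (\<integral>\<^sup>+x. emeasure unit_leb (Pair x -` S_set i j r) \<partial>unit_leb)"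
    by (rule emeasure_pair_measure_alt[OF S_set_sets])
  also have "\<dots> \<le> (\<integral>\<^sup>+x. ennreal (4 * r) \<partial>unit_leb)"
  proof (rule nn_integral_mono)
    fix x assume x: "x \<in> space unit_leb"
    have "Pair x -` S_set i j r = {y\<in>{0..1}. \<bar>(doubling ^^ j) y - (doubling ^^ i) x\<bar> < r}"
      using x by (auto simp: S_set_def space_pair_measure abs_minus_commute)
    then show "emeasure unit_leb (Pair x -` S_set i j r) \<le> ennreal (4 * r)"
      using one_dim_bound[OF r, of j "(doubling ^^ i) x"] by simp
  qed
  also have "\<dots> = ennreal (4 * r) * emeasure unit_leb {0..1}"
    by simp
  also have "emeasure unit_leb {0..1} = 1"
  proof -
    have "emeasure unit_leb {0..1} = emeasure lborel {0..1::real}"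
      unfolding unit_leb_def by (rule emeasure_restrict_space) auto
    then show ?thesis by simp
  qed
  finally show ?thesis by simp
qed

lemma E_set_eq: "E_set doubling n r = (\<Union>p\<in>{..<n} \<times> {..<n}. S_set (fst p) (snd p) r)"
  by (auto simp: E_set_def S_set_def space_pair_measure) blast

lemma E_set_sets: "E_set doubling n r \<in> sets (unit_leb \<Otimes>\<^sub>M unit_leb)"
  unfolding E_set_eq by (intro sets.finite_UN) (auto simp: S_set_sets)

lemma E_set_bound:
  assumes r: "r > 0"
  shows "emeasure (unit_leb \<Otimes>\<^sub>M unit_leb) (E_set doubling n r) \<le> ennreal (4 * real n ^ 2 * r)"
proof -
  have "emeasure (unit_leb \<Otimes>\<^sub>M unit_leb) (E_set doubling n r)
     \<le> (\<Sum>p\<in>{..<n} \<times> {..<n}. emeasure (unit_leb \<Otimes>\<^sub>M unit_leb) (S_set (fst p) (snd p) r))"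
    unfolding E_set_eq by (rule emeasure_subadditive_finite) (auto simp: S_set_sets)
  also have "\<dots> \<le> (\<Sum>p\<in>{..<n} \<times> {..<n}. ennreal (4 * r))"
    by (rule sum_mono) (rule S_set_bound[OF r])
  also have "\<dots> = of_nat (n * n) * ennreal (4 * r)" by simp
  also have "\<dots> = ennreal (real (n * n)) * ennreal (4 * r)"
    by (simp only: ennreal_of_nat_eq_real_of_nat)
  also have "\<dots> = ennreal (real (n * n) * (4 * r))"
    using r by (subst ennreal_mult[symmetric]) auto
  also have "\<dots> = ennreal (4 * real n ^ 2 * r)"
    by (simp add: power2_eq_square algebra_simps)
  finally show ?thesis .
qed

theorem mainTheorem6:
  fixes r :: "nat \<Rightarrow> real"
  assumes "\<And>n. r n > 0"
    and "(\<lambda>n. real n ^ 2 * r n) \<longlonglongrightarrow> 0"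
  shows "liminf (\<lambda>n. E_set doubling n (r n)) \<in> sets (unit_leb \<Otimes>\<^sub>M unit_leb)
    \<and> emeasure (unit_leb \<Otimes>\<^sub>M unit_leb) (liminf (\<lambda>n. E_set doubling n (r n))) = 0"
proof -
  let ?M = "unit_leb \<Otimes>\<^sub>M unit_leb"
  let ?B = "\<lambda>N. \<Inter>m\<in>{N..}. E_set doubling m (r m)"
  have eq: "liminf (\<lambda>n. E_set doubling n (r n)) = (\<Union>N. ?B N)"
    by (simp add: liminf_SUP_INF)
  have Bs: "?B N \<in> sets ?M" for N
    by (rule sets.countable_INT') (auto simp: E_set_sets)
  have B0: "emeasure ?M (?B N) = 0" for N
  proof -
    have lim: "(\<lambda>m. ennreal (4 * real m ^ 2 * r m)) \<longlonglongrightarrow> ennreal 0"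
    proof (rule tendsto_ennrealI)
      show "(\<lambda>m. 4 * real m ^ 2 * r m) \<longlonglongrightarrow> 0"
        using tendsto_mult_left[OF assms(2), of 4] by (simp add: mult.assoc)
    qed
    have ev: "eventually (\<lambda>m. emeasure ?M (?B N) \<le> ennreal (4 * real m ^ 2 * r m)) sequentially"
    proof (rule eventually_sequentiallyI[of N])
      fix m assume m: "N \<le> m"
      have "emeasure ?M (?B N) \<le> emeasure ?M (E_set doubling m (r m))"
        by (rule emeasure_mono) (use m in \<open>auto simp: E_set_sets\<close>)
      also have "\<dots> \<le> ennreal (4 * real m ^ 2 * r m)" by (rule E_set_bound[OF assms(1)])
      finally show "emeasure ?M (?B N) \<le> ennreal (4 * real m ^ 2 * r m)" .
    qed
    have "emeasure ?M (?B N) \<le> ennreal 0"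
      by (rule tendsto_le[OF trivial_limit_sequentially lim tendsto_const ev])
    then show ?thesis by simp
  qed
  have "(\<Union>N. ?B N) \<in> sets ?M" using Bs by auto
  moreover have "emeasure ?M (\<Union>N. ?B N) = 0"
    by (rule emeasure_UN_eq_0) (auto simp: Bs B0)
  ultimately show ?thesis unfolding eq by simp
qed

end
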